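(* Let $(\Omega,\mathcal{F},P)$ be a probability space and let $(\mathcal{F}_n)_{n\ge 1}$ be an increasing sequence of sub-$\sigma$-algebras of $\mathcal{F}$. For $n=1,2,\dots$ let $X_n$ be an $\mathcal{F}_n$-measurable real-valued random variable, let $T_n:\mathbb{R}^n\to\mathbb{R}$ be a Borel measurable function, and let $W_n$ be an $\mathcal{F}_{n+1}$-measurable real-valued random variable such that $$X_{n+1}=T_n(X_1,\dots,X_n)+W_n .$$ Assume $\mathbb{E}[W_n\mid\mathcal{F}_n]=0$ almost surely for every $n$, and $\sum_{n=1}^\infty \mathbb{E}[W_n^2]<\infty$. Let $(\alpha_n),(\beta_n),(\gamma_n)$ be sequences of real numbers with $\alpha_n\ge0$, $\beta_n\ge0$, $\gamma_n\ge0$, $\lim_{n\to\infty}\alpha_n=0$, $\sum_{n=1}^\infty\beta_n<\infty$ and $\sum_{n=1}^\infty\gamma_n=\infty$. Suppose there is a point $x_*\in\mathbb{R}$ such that for all $n\ge1$ and all $x_1,\dots,x_n\in\mathbb{R}$, $$|T_n(x_1,\dots,x_n)-x_*|\le\max\big(\alpha_n,\,(1+\beta_n)|x_n-x_*|-\gamma_n\big).$$ Then $X_n\to x_*$ almost surely, i.e. $P\{\lim_{n\to\infty}X_n=x_*\}=1$.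
   Context: $\mathbb{E}[\,\cdot\mid\mathcal{F}_n]$ denotes conditional expectation with respect to the sub-$\sigma$-algebra $\mathcal{F}_n$. *)

theory Defs
  imports "HOL-Probability.Probability"
begin

end

theory Submission
  imports Defs
begin


lemma tail_lim:
  fixes g :: "nat \<Rightarrow> real"
  assumes "summable g"
  shows "(\<lambda>n. suminf g - sum g {..<n}) \<longlonglongrightarrow> 0"
  using suminf_exist_split2[OF assms] suminf_minus_initial_segment[OF assms] by simp

lemma det_bounded:
  fixes q a \<beta> g :: "nat \<Rightarrow> real"
  assumes q0: "\<And>n. q n \<ge> 0"
    and a: "a \<longlonglongrightarrow> 0" and b0: "\<And>n. \<beta> n \<ge> 0" and bs: "summable \<beta>"
    and gs: "summable g"
    and step: "\<And>n. q (Suc n) \<le> g n + max (a n) (max 1 ((1 + \<beta> n) * q n + \<beta> n))"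
  shows "\<exists>Q. \<forall>n. q n \<le> Q"
proof -
  define G where "G n = suminf g - sum g {..<n}" for n
  have GS: "G n = g n + G (Suc n)" for n unfolding G_def by simp
  have "convergent G" using tail_lim[OF gs] unfolding G_def[symmetric] convergent_def by blast
  then obtain C1 where C1: "\<And>n. \<bar>G n\<bar> \<le> C1"
    using convergent_imp_Bseq Bseq_iff real_norm_def  by (metis BseqE less_eq_real_def)
  have "convergent a" using a convergent_def by blast
  then obtain C2 where C2: "\<And>n. \<bar>a n\<bar> \<le> C2"
    using convergent_imp_Bseq by (metis BseqE less_eq_real_def real_norm_def)
  define K where "K = C1 + C2 + 1"
  have C1p: "C1 \<ge> 0" using C1[of 0] by simp
  have C2p: "C2 \<ge> 0" using C2[of 0] by simp
  define w where "w n = q n + G n" for n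
  define p where "p n = max (2*K) (w n + K)" for n
  have Kp: "K > 0" unfolding K_def using C1p C2p by simp
  have pstep: "p (Suc n) \<le> (1 + \<beta> n) * p n" for n
  proof -
    have "w (Suc n) \<le> G n + max (a n) (max 1 ((1 + \<beta> n) * q n + \<beta> n))"
      using step[of n] GS[of n] unfolding w_def by simp
    also have "\<dots> \<le> max K ((1 + \<beta> n) * w n + \<beta> n * K)"
    proof -
      have "G n + a n \<le> K" using C1[of n] C2[of n] unfolding K_def by simp
      moreover have "G n + 1 \<le> K" using C1[of n] C2p unfolding K_def by simp
      moreover have "G n + ((1 + \<beta> n) * q n + \<beta> n) \<le> (1 + \<beta> n) * w n + \<beta> n * K"
      proof -
        have "\<beta> n * (1 - G n) \<le> \<beta> n * K"
          using b0[of n] C1[of n] C2p unfolding K_def by (intro mult_left_mono) auto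
        then show ?thesis unfolding w_def by (simp add: algebra_simps)
      qed
      ultimately show ?thesis by auto
    qed
    finally have "w (Suc n) + K \<le> max (2*K) ((1 + \<beta> n) * (w n + K))"
      by (simp add: algebra_simps)
    moreover have "2*K \<le> (1 + \<beta> n) * p n"
    proof -
      have "2*K \<le> (1 + \<beta> n) * (2 * K)" using b0[of n] Kp by simp
      also have "\<dots> \<le> (1 + \<beta> n) * p n" using b0[of n] unfolding p_def
        by (intro mult_left_mono) auto
      finally show ?thesis .
    qed
    moreover have "(1 + \<beta> n) * (w n + K) \<le> (1 + \<beta> n) * p n" using b0[of n] unfolding p_def
        by (intro mult_left_mono) auto
    ultimately show ?thesis unfolding p_def[of "Suc n"] by simp
  qed
  have pp: "p n > 0" for n unfolding p_def using Kp by simp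
  have pb: "p n \<le> p 0 * exp (sum \<beta> {..<n})" for n
  proof (induction n)
    case 0 then show ?case by simp
  next
    case (Suc n)
    have "p (Suc n) \<le> (1 + \<beta> n) * p n" by (rule pstep)
    also have "\<dots> \<le> exp (\<beta> n) * (p 0 * exp (sum \<beta> {..<n}))"
      using Suc.IH b0[of n] pp[of n]
      by (intro mult_mono) (auto simp: exp_ge_add_one_self)
    also have "\<dots> = p 0 * exp (sum \<beta> {..<Suc n})" by (simp add: exp_add)
    finally show ?case .
  qed
  have "sum \<beta> {..<n} \<le> suminf \<beta>" for n using bs b0 by (intro sum_le_suminf) auto
  then have "p n \<le> p 0 * exp (suminf \<beta>)" for n
    using pb[of n] pp[of 0] by (smt (verit) exp_le_cancel_iff mult_left_mono)
  then have "q n \<le> p 0 * exp (suminf \<beta>) + C1" for n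
    using C1[of n] Kp unfolding p_def w_def by (smt (verit))
  then show ?thesis by blast
qed


lemma det_conv:
  fixes q a \<beta> \<gamma> g :: "nat \<Rightarrow> real"
  assumes q0: "\<And>n. q n \<ge> 0"
    and a: "a \<longlonglongrightarrow> 0" and b0: "\<And>n. \<beta> n \<ge> 0" and bs: "summable \<beta>"
    and c0: "\<And>n. \<gamma> n \<ge> 0"
    and cs: "filterlim (\<lambda>N. \<Sum>n<N. \<gamma> n) at_top sequentially"
    and gs: "summable g"
    and step: "\<And>\<epsilon>. \<epsilon> > 0 \<Longrightarrow> \<exists>\<kappa>>0. \<forall>n. q (Suc n) \<le> g n + max (a n) (max \<epsilon> ((1 + \<beta> n) * q n + \<beta> n - \<gamma> n * \<kappa>))"
  shows "q \<longlonglongrightarrow> 0"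
proof -
  obtain \<kappa>1 where k1: "\<kappa>1 > 0" "\<And>n. q (Suc n) \<le> g n + max (a n) (max 1 ((1 + \<beta> n) * q n + \<beta> n - \<gamma> n * \<kappa>1))"
    using step[of 1] by auto
  have "q (Suc n) \<le> g n + max (a n) (max 1 ((1 + \<beta> n) * q n + \<beta> n))" for n
  proof -
    have "\<gamma> n * \<kappa>1 \<ge> 0" using c0[of n] k1(1) by simp
    then show ?thesis using k1(2)[of n] by (smt (verit))
  qed
  from det_bounded[OF q0 a b0 bs gs this] obtain Q where Q: "\<And>n. q n \<le> Q" by blast
  have Q0: "Q \<ge> 0" using Q[of 0] q0[of 0] by simp
  define G where "G n = suminf g - sum g {..<n}" for n
  have GS: "G n = g n + G (Suc n)" for n unfolding G_def by simp
  have Gl: "G \<longlonglongrightarrow> 0" using tail_lim[OF gs] unfolding G_def .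
  define B where "B n = suminf \<beta> - sum \<beta> {..<n}" for n
  have BS: "B n = \<beta> n + B (Suc n)" for n unfolding B_def by simp
  have Bl: "B \<longlonglongrightarrow> 0" using tail_lim[OF bs] unfolding B_def .
  have B0: "B n \<ge> 0" for n unfolding B_def using sum_le_suminf[OF bs, of "{..<n}"] b0 by auto
  show ?thesis
  proof (rule LIMSEQ_I)
    fix e :: real assume e: "e > 0"
    define \<epsilon> where "\<epsilon> = e / 8"
    have ep: "\<epsilon> > 0" using e unfolding \<epsilon>_def by simp
    obtain \<kappa> where k: "\<kappa> > 0" "\<And>n. q (Suc n) \<le> g n + max (a n) (max \<epsilon> ((1 + \<beta> n) * q n + \<beta> n - \<gamma> n * \<kappa>))"
      using step[OF ep] by auto
    define w where "w n = q n + G n + (Q+1) * B n" for n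
    have ev1: "eventually (\<lambda>n. \<bar>a n\<bar> < \<epsilon>) sequentially"
      using a ep unfolding tendsto_iff by (auto simp: dist_real_def)
    have ev2: "eventually (\<lambda>n. \<bar>G n\<bar> < \<epsilon>) sequentially"
      using Gl ep unfolding tendsto_iff by (auto simp: dist_real_def)
    have "(\<lambda>n. (Q+1) * B n) \<longlonglongrightarrow> (Q+1) * 0" by (intro tendsto_intros Bl)
    then have ev3: "eventually (\<lambda>n. \<bar>(Q+1) * B n\<bar> < \<epsilon>) sequentially"
      using ep unfolding tendsto_iff by (auto simp: dist_real_def)
    obtain N1 where N1: "\<And>n. n \<ge> N1 \<Longrightarrow> \<bar>a n\<bar> < \<epsilon> \<and> \<bar>G n\<bar> < \<epsilon> \<and> \<bar>(Q+1) * B n\<bar> < \<epsilon>"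
      using eventually_conj[OF ev1 eventually_conj[OF ev2 ev3]] unfolding eventually_sequentially by blast
    have wstep: "w (Suc n) \<le> max (3*\<epsilon>) (w n - \<gamma> n * \<kappa>)" if "n \<ge> N1" for n
    proof -
      have "w (Suc n) \<le> G n + max (a n) (max \<epsilon> ((1 + \<beta> n) * q n + \<beta> n - \<gamma> n * \<kappa>)) + (Q+1) * B (Suc n)"
        using k(2)[of n] GS[of n] unfolding w_def by simp
      moreover have "G n + a n + (Q+1) * B (Suc n) \<le> 3*\<epsilon>"
        using N1[OF that] N1[of "Suc n"] that by auto
      moreover have "G n + \<epsilon> + (Q+1) * B (Suc n) \<le> 3*\<epsilon>"
        using N1[OF that] N1[of "Suc n"] that by auto
      moreover have "G n + ((1 + \<beta> n) * q n + \<beta> n - \<gamma> n * \<kappa>) + (Q+1) * B (Suc n) \<le> w n - \<gamma> n * \<kappa>"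
      proof -
        have "\<beta> n * (q n + 1) \<le> \<beta> n * (Q + 1)" using b0[of n] Q[of n] by (intro mult_left_mono) auto
        then show ?thesis unfolding w_def BS[of n] by (simp add: algebra_simps)
      qed
      ultimately show ?thesis by linarith
    qed
    have wlow: "w n \<ge> - \<epsilon>" if "n \<ge> N1" for n
    proof -
      have "(Q+1) * B n \<ge> 0" using B0[of n] Q0 by simp
      then show ?thesis using q0[of n] N1[OF that] unfolding w_def by linarith
    qed
    have "\<exists>n0\<ge>N1. w n0 \<le> 3*\<epsilon>"
    proof (rule ccontr)
      assume "\<not> ?thesis"
      then have big: "\<And>n. n \<ge> N1 \<Longrightarrow> w n > 3*\<epsilon>" by force
      have dec: "w (N1 + k) \<le> w N1 - \<kappa> * (\<Sum>n<N1+k. \<gamma> n) + \<kappa> * (\<Sum>n<N1. \<gamma> n)" for k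
      proof (induction k)
        case 0 then show ?case by simp
      next
        case (Suc k)
        have "w (Suc (N1 + k)) \<le> max (3*\<epsilon>) (w (N1+k) - \<gamma> (N1+k) * \<kappa>)" by (rule wstep) simp
        moreover have "w (Suc (N1 + k)) > 3*\<epsilon>" by (rule big) simp
        ultimately have "w (Suc (N1 + k)) \<le> w (N1+k) - \<gamma> (N1+k) * \<kappa>" by linarith
        then show ?case using Suc.IH by (simp add: algebra_simps)
      qed
      have "eventually (\<lambda>N. (\<Sum>n<N. \<gamma> n) \<ge> (w N1 + \<epsilon>) / \<kappa> + (\<Sum>n<N1. \<gamma> n) + 1) sequentially"
        using cs by (simp add: filterlim_at_top)
      then obtain N2 where N2: "\<And>N. N \<ge> N2 \<Longrightarrow> (\<Sum>n<N. \<gamma> n) \<ge> (w N1 + \<epsilon>) / \<kappa> + (\<Sum>n<N1. \<gamma> n) + 1"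
        unfolding eventually_sequentially by blast
      have "(\<Sum>n<N1+N2. \<gamma> n) \<ge> (w N1 + \<epsilon>) / \<kappa> + (\<Sum>n<N1. \<gamma> n) + 1" by (rule N2) simp
      then have "\<kappa> * (\<Sum>n<N1+N2. \<gamma> n) \<ge> \<kappa> * ((w N1 + \<epsilon>) / \<kappa> + (\<Sum>n<N1. \<gamma> n) + 1)"
        using k(1) by (intro mult_left_mono) auto
      moreover have "\<kappa> * ((w N1 + \<epsilon>) / \<kappa> + (\<Sum>n<N1. \<gamma> n) + 1) = w N1 + \<epsilon> + \<kappa> * (\<Sum>n<N1. \<gamma> n) + \<kappa>"
        using k(1) by (simp add: field_simps)
      ultimately have "\<kappa> * (\<Sum>n<N1+N2. \<gamma> n) \<ge> w N1 + \<epsilon> + \<kappa> * (\<Sum>n<N1. \<gamma> n) + \<kappa>"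
        by linarith
      with dec[of N2] wlow[of "N1+N2"] k(1) show False by simp
    qed
    then obtain n0 where n0: "n0 \<ge> N1" "w n0 \<le> 3*\<epsilon>" by blast
    have wsmall: "w (n0 + k) \<le> 3*\<epsilon>" for k
    proof (induction k)
      case 0 then show ?case using n0 by simp
    next
      case (Suc k)
      have "w (Suc (n0 + k)) \<le> max (3*\<epsilon>) (w (n0+k) - \<gamma> (n0+k) * \<kappa>)" using n0 by (intro wstep) simp
      moreover have "\<gamma> (n0+k) * \<kappa> \<ge> 0" using c0 k(1) by simp
      ultimately show ?case using Suc.IH by simp
    qed
    show "\<exists>no. \<forall>n\<ge>no. norm (q n - 0) < e"
    proof (intro exI allI impI)
      fix n assume "n \<ge> n0"
      then obtain k where nk: "n = n0 + k" by (metis le_add_diff_inverse)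
      have "(Q+1) * B n \<ge> 0" using B0[of n] Q0 by simp
      moreover have "\<bar>G n\<bar> < \<epsilon>" using N1[of n] n0 nk by simp
      ultimately have "q n \<le> 4 * \<epsilon>" using wsmall[of k] unfolding w_def nk by linarith
      then show "norm (q n - 0) < e" using q0[of n] e unfolding \<epsilon>_def by simp
    qed
  qed
qed



definition phi :: "real \<Rightarrow> real" where "phi z = sqrt (1 + z\<^sup>2)"

lemma phi_ge1: "phi z \<ge> 1" unfolding phi_def by simp
lemma phi_pos: "phi z > 0" using phi_ge1[of z] by simp
lemma phi_sq: "(phi z)\<^sup>2 = 1 + z\<^sup>2" unfolding phi_def by simp

lemma phi_taylor: "phi (t + w) \<le> phi t + t / phi t * w + w\<^sup>2 / 2"
proof -
  define A where "A = phi t"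
  have A1: "A \<ge> 1" unfolding A_def by (rule phi_ge1)
  have AA: "A\<^sup>2 = 1 + t\<^sup>2" unfolding A_def by (rule phi_sq)
  define R where "R = A + t / A * w + w\<^sup>2 / (2*A)"
  have R_eq: "R = (1 + (t + w/2)\<^sup>2 + w\<^sup>2/4) / A" unfolding R_def using A1 AA
    by (simp add: field_simps power2_eq_square)
  have Rpos: "R \<ge> 0" unfolding R_eq using A1 by (intro divide_nonneg_pos) auto
  define X where "X = t / A * w + w\<^sup>2 / (2*A)"
  have RX: "R = A + X" unfolding R_def X_def by simp
  have AX: "2 * A * X = 2*t*w + w\<^sup>2" unfolding X_def using A1 by (simp add: field_simps power2_eq_square)
  have "R\<^sup>2 = A\<^sup>2 + 2 * A * X + X\<^sup>2" unfolding RX by (simp add: power2_eq_square algebra_simps)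
  also have "\<dots> = 1 + (t+w)\<^sup>2 + X\<^sup>2" unfolding AX AA by (simp add: power2_eq_square algebra_simps)
  finally have R2: "R\<^sup>2 \<ge> 1 + (t+w)\<^sup>2" by simp
  have "phi (t+w) \<le> R" unfolding phi_def using real_sqrt_le_mono[OF R2] Rpos
    by simp
  also have "R \<le> A + t / A * w + w\<^sup>2 / 2" 
  proof -
    have "w\<^sup>2/(2*A) \<le> w\<^sup>2/2" using A1 by (intro divide_left_mono) auto
    then show ?thesis unfolding R_def by simp
  qed
  finally show ?thesis unfolding A_def .
qed


lemma phi_abs: "phi \<bar>z\<bar> = phi z" unfolding phi_def by simp

lemma phi_mono: assumes "\<bar>x\<bar> \<le> \<bar>y\<bar>" shows "phi x \<le> phi y"
proof -
  have "x\<^sup>2 \<le> y\<^sup>2" using assms by (simp only: abs_le_square_iff)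
  then show ?thesis unfolding phi_def by simp
qed

lemma phi_cont: "isCont phi z" unfolding phi_def by (intro continuous_intros)

lemma phi_deriv_bound: "\<bar>t / phi t\<bar> \<le> 1"
proof -
  have "\<bar>t\<bar> \<le> phi t" unfolding phi_def by (rule real_le_rsqrt) simp
  moreover have "\<bar>t / phi t\<bar> = \<bar>t\<bar> / phi t" using phi_pos[of t] by (simp add: abs_divide)
  ultimately show ?thesis using phi_pos[of t] by (simp add: mult_imp_div_pos_le)
qed
lemma phi_step:
  assumes a: "\<alpha> \<ge> 0" and b: "\<beta> \<ge> 0" and c: "\<gamma> \<ge> 0" and e: "\<epsilon> > 0"
    and t: "\<bar>t\<bar> \<le> max \<alpha> ((1 + \<beta>) * \<bar>v\<bar> - \<gamma>)"
  shows "phi t - 1 \<le> max (phi \<alpha> - 1) (max \<epsilon> ((1 + \<beta>) * (phi v - 1) + \<beta> - \<gamma> * (\<epsilon> / phi \<epsilon>)))"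
proof -
  define s where "s = (1 + \<beta>) * \<bar>v\<bar> - \<gamma>"
  show ?thesis
  proof (cases "s \<le> \<alpha>")
    case True
    then have "\<bar>t\<bar> \<le> \<bar>\<alpha>\<bar>" using t a unfolding s_def by auto
    then show ?thesis using phi_mono by fastforce
  next
    case False
    then have ts: "\<bar>t\<bar> \<le> \<bar>s\<bar>" and s0: "s \<ge> 0" using t a unfolding s_def by auto
    have pt: "phi t \<le> phi s" using phi_mono[OF ts] .
    show ?thesis
    proof (cases "s \<le> \<epsilon>")
      case True
      have "phi s \<le> phi \<epsilon>" using True s0 by (intro phi_mono) auto
      also have "phi \<epsilon> \<le> 1 + \<epsilon>" unfolding phi_def
        apply (rule real_le_lsqrt) using e by (auto simp: power2_eq_square algebra_simps)
      finally show ?thesis using pt by simp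
    next
      case False
      let ?a = "(1 + \<beta>) * \<bar>v\<bar>"
      have as: "?a = s + \<gamma>" unfolding s_def by simp
      (* convexity *)
      have cs: "1 + s * ?a \<le> phi s * phi ?a"
      proof -
        have "(1 + s * ?a)\<^sup>2 = (1 + s\<^sup>2) * (1 + ?a\<^sup>2) - (s - ?a)\<^sup>2"
          by (simp add: power2_eq_square algebra_simps)
        then have "(1 + s * ?a)\<^sup>2 \<le> (1 + s\<^sup>2) * (1 + ?a\<^sup>2)"
          using zero_le_power2[of "s - ?a"] by linarith
        then have "\<bar>1 + s * ?a\<bar> \<le> sqrt ((1 + s\<^sup>2) * (1 + ?a\<^sup>2))"
          using real_le_rsqrt real_sqrt_abs by (metis real_sqrt_le_mono)
        then show ?thesis unfolding phi_def by (simp add: real_sqrt_mult)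
      qed
      have conv: "phi s + \<gamma> * (s / phi s) \<le> phi ?a"
      proof -
        have "phi s * (phi s + \<gamma> * (s / phi s)) = 1 + s\<^sup>2 + \<gamma> * s"
          using phi_pos[of s] phi_sq[of s] by (simp add: field_simps power2_eq_square)
        also have "\<dots> = 1 + s * ?a" unfolding as by (simp add: power2_eq_square algebra_simps)
        also have "\<dots> \<le> phi s * phi ?a" by (rule cs)
        finally show ?thesis using phi_pos[of s] by (simp add: mult_le_cancel_left_pos)
      qed
      have pa: "phi ?a \<le> (1 + \<beta>) * phi v"
      proof -
        have e1: "((1 + \<beta>) * phi v)\<^sup>2 = (1 + \<beta>)\<^sup>2 * (1 + v\<^sup>2)"
          by (simp add: power_mult_distrib phi_sq)
        have e2: "?a\<^sup>2 = (1 + \<beta>)\<^sup>2 * v\<^sup>2" by (simp add: power_mult_distrib)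
        have e3: "(1 + \<beta>)\<^sup>2 \<ge> 1" using b by (simp add: one_le_power)
        have "1 + ?a\<^sup>2 \<le> ((1 + \<beta>) * phi v)\<^sup>2"
          unfolding e1 e2 using e3 by (simp add: algebra_simps)
        moreover have "0 \<le> (1 + \<beta>) * phi v" using b phi_pos[of v] by simp
        ultimately show ?thesis unfolding phi_def[of ?a]
          by (intro real_le_lsqrt)
      qed
      have hm: "\<epsilon> / phi \<epsilon> \<le> s / phi s"
      proof -
        have "\<epsilon> * phi s \<le> s * phi \<epsilon>"
        proof -
          have "\<epsilon>\<^sup>2 \<le> s\<^sup>2" using False e by (intro power_mono) auto
          then have "(\<epsilon> * phi s)\<^sup>2 \<le> (s * phi \<epsilon>)\<^sup>2"
            by (simp add: power_mult_distrib phi_sq algebra_simps)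
          then show ?thesis using e s0 phi_pos[of s] phi_pos[of \<epsilon>] by (simp add: power2_le_iff_abs_le)
        qed
        then show ?thesis using phi_pos[of s] phi_pos[of \<epsilon>] by (simp add: divide_le_eq le_divide_eq mult.commute)
      qed
      have "\<gamma> * (\<epsilon> / phi \<epsilon>) \<le> \<gamma> * (s / phi s)" using hm c by (intro mult_left_mono)
      then have "phi s \<le> (1 + \<beta>) * phi v - \<gamma> * (\<epsilon> / phi \<epsilon>)" using conv pa by linarith
      then show ?thesis using pt by (simp add: algebra_simps)
    qed
  qed
qed



lemma sqint_add:
  fixes f g :: "'a \<Rightarrow> real"
  assumes [measurable]: "f \<in> borel_measurable M" "g \<in> borel_measurable M"
    and "integrable M (\<lambda>x. (f x)\<^sup>2)" "integrable M (\<lambda>x. (g x)\<^sup>2)"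
  shows "integrable M (\<lambda>x. (f x + g x)\<^sup>2)"
proof (rule Bochner_Integration.integrable_bound[where f="\<lambda>x. 2 * (f x)\<^sup>2 + 2 * (g x)\<^sup>2"])
  show "integrable M (\<lambda>x. 2 * (f x)\<^sup>2 + 2 * (g x)\<^sup>2)" using assms(3,4) by auto
  show "(\<lambda>x. (f x + g x)\<^sup>2) \<in> borel_measurable M" by measurable
  have "(a + b)\<^sup>2 \<le> 2 * a\<^sup>2 + 2 * b\<^sup>2" for a b :: real
  proof -
    have "0 \<le> (a - b)\<^sup>2" by simp
    then show ?thesis by (simp add: power2_eq_square algebra_simps)
  qed
  then show "AE x in M. norm ((f x + g x)\<^sup>2) \<le> norm (2 * (f x)\<^sup>2 + 2 * (g x)\<^sup>2)" by simp
qed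

lemma sqint_mult_bdd:
  fixes f h :: "'a \<Rightarrow> real"
  assumes [measurable]: "f \<in> borel_measurable M" "h \<in> borel_measurable M"
    and "integrable M (\<lambda>x. (f x)\<^sup>2)" and hb: "\<And>x. \<bar>h x\<bar> \<le> 1"
  shows "integrable M (\<lambda>x. (h x * f x)\<^sup>2)"
proof (rule Bochner_Integration.integrable_bound[where f="\<lambda>x. (f x)\<^sup>2"])
  show "integrable M (\<lambda>x. (f x)\<^sup>2)" by fact
  show "(\<lambda>x. (h x * f x)\<^sup>2) \<in> borel_measurable M" by measurable
  have "(h x * f x)\<^sup>2 \<le> (f x)\<^sup>2" for x
  proof -
    have "(h x)\<^sup>2 \<le> 1" using hb[of x] by (simp add: abs_le_square_iff[of "h x" 1, simplified])
    then have "(h x)\<^sup>2 * (f x)\<^sup>2 \<le> 1 * (f x)\<^sup>2" by (intro mult_right_mono) auto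
    then show ?thesis by (simp add: power_mult_distrib)
  qed
  then show "AE x in M. norm ((h x * f x)\<^sup>2) \<le> norm ((f x)\<^sup>2)" by simp
qed

lemma int_prod:
  fixes f g :: "'a \<Rightarrow> real"
  assumes [measurable]: "f \<in> borel_measurable M" "g \<in> borel_measurable M"
    and "integrable M (\<lambda>x. (f x)\<^sup>2)" "integrable M (\<lambda>x. (g x)\<^sup>2)"
  shows "integrable M (\<lambda>x. f x * g x)"
proof (rule Bochner_Integration.integrable_bound[where f="\<lambda>x. (f x)\<^sup>2 + (g x)\<^sup>2"])
  show "integrable M (\<lambda>x. (f x)\<^sup>2 + (g x)\<^sup>2)" using assms(3,4) by auto
  show "(\<lambda>x. f x * g x) \<in> borel_measurable M" by measurable
  have "\<bar>a * b\<bar> \<le> a\<^sup>2 + b\<^sup>2" for a b :: real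
  proof -
    have "0 \<le> (\<bar>a\<bar> - \<bar>b\<bar>)\<^sup>2" by simp
    then have "2 * \<bar>a\<bar> * \<bar>b\<bar> \<le> a\<^sup>2 + b\<^sup>2" by (simp add: power2_eq_square algebra_simps)
    moreover have "\<bar>a * b\<bar> = \<bar>a\<bar> * \<bar>b\<bar>" by (simp add: abs_mult)
    moreover have "0 \<le> \<bar>a\<bar> * \<bar>b\<bar>" by simp
    ultimately show ?thesis by linarith
  qed
  then show "AE x in M. norm (f x * g x) \<le> norm ((f x)\<^sup>2 + (g x)\<^sup>2)" by simp
qed

locale mg = prob_space M for M :: "'a measure" +
  fixes G :: "nat \<Rightarrow> 'a measure" and V c :: "nat \<Rightarrow> 'a \<Rightarrow> real"
  assumes sub: "\<And>k. subalgebra M (G k)"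
    and incr: "\<And>k l. k \<le> l \<Longrightarrow> sets (G k) \<subseteq> sets (G l)"
    and Vmeas: "\<And>k. V k \<in> borel_measurable (G (Suc k))"
    and Vint: "\<And>k. integrable M (\<lambda>x. (V k x)\<^sup>2)"
    and Vce: "\<And>k. AE x in M. real_cond_exp M (G k) (V k) x = 0"
    and cmeas: "\<And>k. c k \<in> borel_measurable (G k)"
    and cb: "\<And>k x. \<bar>c k x\<bar> \<le> 1"
begin

lemma Gsub: "k \<le> l \<Longrightarrow> subalgebra (G l) (G k)"
  using sub[of k] sub[of l] incr[of k l] unfolding subalgebra_def by auto

lemma meas_up: "f \<in> borel_measurable (G k) \<Longrightarrow> k \<le> l \<Longrightarrow> f \<in> borel_measurable (G l)"
  using measurable_from_subalg[OF Gsub] by blast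

lemma meas_M: "f \<in> borel_measurable (G k) \<Longrightarrow> f \<in> borel_measurable M"
  using measurable_from_subalg[OF sub] by blast

lemma sets_up: "A \<in> sets (G k) \<Longrightarrow> A \<in> sets M"
  using sub[of k] unfolding subalgebra_def by auto

lemma space_G: "space (G k) = space M"
  using sub[of k] unfolding subalgebra_def by auto

lemma VmeasM[measurable]: "V k \<in> borel_measurable M" using meas_M[OF Vmeas] .
lemma cmeasM[measurable]: "c k \<in> borel_measurable M" using meas_M[OF cmeas] .

lemma orth:
  assumes gm: "g \<in> borel_measurable (G k)" and gi: "integrable M (\<lambda>x. (g x)\<^sup>2)"
  shows "integrable M (\<lambda>x. g x * V k x)" "(\<integral>x. g x * V k x \<partial>M) = 0"
proof -
  have gM[measurable]: "g \<in> borel_measurable M" using meas_M[OF gm] .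
  show i: "integrable M (\<lambda>x. g x * V k x)" by (rule int_prod[OF gM VmeasM gi Vint])
  have "finite_measure_subalgebra M (G k)"
    unfolding finite_measure_subalgebra_def finite_measure_subalgebra_axioms_def using sub[of k] by simp
  then interpret s: sigma_finite_subalgebra M "G k"
    using finite_measure_subalgebra_is_sigma_finite by blast
  have "(\<integral>x. g x * V k x \<partial>M) = (\<integral>x. g x * real_cond_exp M (G k) (V k) x \<partial>M)"
    using s.real_cond_exp_intg(2)[OF i gm VmeasM] by simp
  also have "\<dots> = (\<integral>x. 0 \<partial>M)"
    by (rule integral_cong_AE) (use Vce[of k] in auto)
  finally show "(\<integral>x. g x * V k x \<partial>M) = 0" by simp
qed

definition S :: "nat \<Rightarrow> nat \<Rightarrow> 'a \<Rightarrow> real" where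
  "S m n x = (\<Sum>k\<in>{m..<n}. c k x * V k x)"

lemma X_meas: "(\<lambda>x. c k x * V k x) \<in> borel_measurable (G (Suc k))"
  using meas_up[OF cmeas[of k], of "Suc k"] Vmeas[of k] by measurable

lemma S_meas: "S m n \<in> borel_measurable (G n)"
  unfolding S_def
proof (rule borel_measurable_sum)
  fix k assume "k \<in> {m..<n}"
  then show "(\<lambda>x. c k x * V k x) \<in> borel_measurable (G n)"
    using meas_up[OF X_meas[of k], of n] by simp
qed

lemma S_measM[measurable]: "S m n \<in> borel_measurable M" using meas_M[OF S_meas] .

lemma S_Suc: "S m (m + Suc d) x = S m (m + d) x + c (m + d) x * V (m + d) x"
  unfolding S_def by simp

lemma S_zero: "S m m x = 0" unfolding S_def by simp

lemma X_sq: "integrable M (\<lambda>x. (c k x * V k x)\<^sup>2)"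
  by (rule sqint_mult_bdd[OF VmeasM cmeasM Vint cb])

lemma S_sq: "integrable M (\<lambda>x. (S m (m + d) x)\<^sup>2)"
proof (induction d)
  case 0 then show ?case by (simp add: S_zero)
next
  case (Suc d)
  show ?case unfolding S_Suc
    by (rule sqint_add[OF S_measM _ Suc.IH X_sq]) measurable
qed

lemma S_second: "(\<integral>x. (S m (m + d) x)\<^sup>2 \<partial>M) \<le> (\<Sum>k\<in>{m..<m+d}. \<integral>x. (V k x)\<^sup>2 \<partial>M)"
proof (induction d)
  case 0 then show ?case by (simp add: S_zero)
next
  case (Suc d)
  let ?S = "S m (m + d)" and ?n = "m + d"
  have e: "(S m (m + Suc d) x)\<^sup>2 = (?S x)\<^sup>2 + 2 * ((?S x * c ?n x) * V ?n x) + (c ?n x * V ?n x)\<^sup>2" for x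
    unfolding S_Suc by (simp add: power2_eq_square algebra_simps)
  have gm: "(\<lambda>x. ?S x * c ?n x) \<in> borel_measurable (G ?n)"
    using S_meas[of m ?n] cmeas[of ?n] by measurable
  have gi: "integrable M (\<lambda>x. (?S x * c ?n x)\<^sup>2)"
    using sqint_mult_bdd[OF S_measM[of m "m+d"] cmeasM[of ?n] S_sq[of m d] cb[of ?n]] by (simp add: mult.commute)
  note o = orth[OF gm gi]
  have "(\<integral>x. (S m (m + Suc d) x)\<^sup>2 \<partial>M) = (\<integral>x. (?S x)\<^sup>2 \<partial>M) + 2 * (\<integral>x. (?S x * c ?n x) * V ?n x \<partial>M) + (\<integral>x. (c ?n x * V ?n x)\<^sup>2 \<partial>M)"
    unfolding e using S_sq o(1) X_sq by simp
  also have "\<dots> = (\<integral>x. (?S x)\<^sup>2 \<partial>M) + (\<integral>x. (c ?n x * V ?n x)\<^sup>2 \<partial>M)" using o(2) by simp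
  also have "(\<integral>x. (c ?n x * V ?n x)\<^sup>2 \<partial>M) \<le> (\<integral>x. (V ?n x)\<^sup>2 \<partial>M)"
  proof (rule integral_mono[OF X_sq Vint])
    fix x
    have "(c ?n x)\<^sup>2 \<le> 1" using cb[of ?n x] by (simp add: abs_le_square_iff[of _ 1, simplified])
    then have "(c ?n x)\<^sup>2 * (V ?n x)\<^sup>2 \<le> 1 * (V ?n x)\<^sup>2" by (intro mult_right_mono) auto
    then show "(c ?n x * V ?n x)\<^sup>2 \<le> (V ?n x)\<^sup>2" by (simp add: power_mult_distrib)
  qed
  finally show ?case using Suc.IH by simp
qed


definition B :: "nat \<Rightarrow> real \<Rightarrow> nat \<Rightarrow> 'a set" where
  "B m l d = {x\<in>space M. \<exists>j\<in>{..d}. l \<le> \<bar>S m (m + j) x\<bar>}"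

lemma B_setsG: "B m l d \<in> sets (G (m + d))"
proof -
  have "{x\<in>space (G (m+d)). \<exists>j\<in>{..d}. l \<le> \<bar>S m (m + j) x\<bar>} \<in> sets (G (m + d))"
  proof (rule sets.sets_Collect_finite_Ex)
    fix j assume "j \<in> {..d}"
    then have [measurable]: "S m (m + j) \<in> borel_measurable (G (m + d))"
      using meas_up[OF S_meas[of m "m+j"], of "m+d"] by simp
    show "{x \<in> space (G (m + d)). l \<le> \<bar>S m (m + j) x\<bar>} \<in> sets (G (m + d))" by measurable
  qed simp
  then show ?thesis unfolding B_def space_G .
qed

lemma B_sets[measurable]: "B m l d \<in> sets M" using sets_up[OF B_setsG] .

lemma maxineq:
  assumes l: "l > 0"
  shows "l\<^sup>2 * measure M (B m l d) \<le> (\<integral>x. indicator (B m l d) x * (S m (m + d) x)\<^sup>2 \<partial>M)"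
proof (induction d)
  case 0
  have "B m l 0 = {}" unfolding B_def using l by (auto simp: S_zero)
  then show ?case by simp
next
  case (Suc d)
  let ?S = "S m (m + d)" and ?S' = "S m (m + Suc d)" and ?n = "m + d"
  let ?B = "B m l d" and ?B' = "B m l (Suc d)"
  define E where "E = ?B' - ?B"
  have BB: "?B \<subseteq> ?B'" unfolding B_def by auto
  have E_sets[measurable]: "E \<in> sets M" unfolding E_def by measurable
  have Eprop: "x \<in> E \<Longrightarrow> l \<le> \<bar>?S' x\<bar>" for x
    unfolding E_def B_def by (auto simp: le_Suc_eq)
  have ind: "(indicator ?B' x :: real) = indicator ?B x + indicator E x" for x
    using BB unfolding E_def by (auto split: split_indicator)
  have BU: "?B' = ?B \<union> E" using BB unfolding E_def by auto
  have mB': "measure M ?B' = measure M ?B + measure M E"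
    unfolding BU by (rule finite_measure_Union) (auto simp: E_def)
  have i1: "integrable M (\<lambda>x. indicator ?B x * (?S' x)\<^sup>2)"
    using integrable_mult_indicator[OF B_sets S_sq[of m "Suc d"]] by simp
  have i2: "integrable M (\<lambda>x. indicator E x * (?S' x)\<^sup>2)"
    using integrable_mult_indicator[OF E_sets S_sq[of m "Suc d"]] by simp
  have i0: "integrable M (\<lambda>x. indicator ?B x * (?S x)\<^sup>2)"
    using integrable_mult_indicator[OF B_sets S_sq[of m d]] by simp
  have i3: "integrable M (\<lambda>x. indicator ?B x * (c ?n x * V ?n x)\<^sup>2)"
    using integrable_mult_indicator[OF B_sets X_sq[of ?n]] by simp
  let ?h = "\<lambda>x. indicator ?B x * c ?n x"
  have hm: "?h \<in> borel_measurable (G ?n)"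
    using B_setsG[of m l d] cmeas[of ?n] by measurable
  have hb: "\<bar>?h x\<bar> \<le> 1" for x using cb[of ?n x] by (auto split: split_indicator)
  have gm: "(\<lambda>x. ?h x * ?S x) \<in> borel_measurable (G ?n)"
    using hm S_meas[of m ?n] by measurable
  have gi: "integrable M (\<lambda>x. (?h x * ?S x)\<^sup>2)"
    by (rule sqint_mult_bdd[OF S_measM _ S_sq hb]) (use meas_M[OF hm] in simp)
  note o = orth[OF gm gi]
  have e: "indicator ?B x * (?S' x)\<^sup>2 = indicator ?B x * (?S x)\<^sup>2 + 2 * ((?h x * ?S x) * V ?n x) + indicator ?B x * (c ?n x * V ?n x)\<^sup>2" for x
    unfolding S_Suc by (simp add: power2_eq_square algebra_simps)
  have "(\<integral>x. indicator ?B x * (?S' x)\<^sup>2 \<partial>M) = (\<integral>x. indicator ?B x * (?S x)\<^sup>2 \<partial>M) + 2 * (\<integral>x. (?h x * ?S x) * V ?n x \<partial>M) + (\<integral>x. indicator ?B x * (c ?n x * V ?n x)\<^sup>2 \<partial>M)"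
    unfolding e using i0 o(1) i3 by simp
  also have "\<dots> \<ge> (\<integral>x. indicator ?B x * (?S x)\<^sup>2 \<partial>M)"
  proof -
    have "(\<integral>x. indicator ?B x * (c ?n x * V ?n x)\<^sup>2 \<partial>M) \<ge> 0"
      by (intro integral_nonneg_AE) auto
    then show ?thesis using o(2) by simp
  qed
  finally have p1: "(\<integral>x. indicator ?B x * (?S' x)\<^sup>2 \<partial>M) \<ge> l\<^sup>2 * measure M ?B" using Suc.IH by simp
  have "(\<integral>x. indicator E x * (?S' x)\<^sup>2 \<partial>M) \<ge> (\<integral>x. indicator E x * l\<^sup>2 \<partial>M)"
  proof (rule integral_mono[OF _ i2])
    show "integrable M (\<lambda>x. indicator E x * l\<^sup>2)" using E_sets by (simp add: integrable_real_indicator emeasure_eq_measure)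
    fix x show "indicator E x * l\<^sup>2 \<le> indicator E x * (?S' x)\<^sup>2"
    proof (cases "x \<in> E")
      case True
      then have "l \<le> \<bar>?S' x\<bar>" by (rule Eprop)
      then have "l\<^sup>2 \<le> (?S' x)\<^sup>2" using l by (metis abs_le_square_iff abs_of_pos)
      then show ?thesis using True by simp
    qed simp
  qed
  also have "(\<integral>x. indicator E x * l\<^sup>2 \<partial>M) = l\<^sup>2 * measure M E"
    using E_sets by (simp add: mult.commute)
  finally have p2: "(\<integral>x. indicator E x * (?S' x)\<^sup>2 \<partial>M) \<ge> l\<^sup>2 * measure M E" .
  have "(\<integral>x. indicator ?B' x * (?S' x)\<^sup>2 \<partial>M) = (\<integral>x. indicator ?B x * (?S' x)\<^sup>2 \<partial>M) + (\<integral>x. indicator E x * (?S' x)\<^sup>2 \<partial>M)"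
    unfolding ind distrib_right using i1 i2 by simp
  then show ?case using p1 p2 mB' by (simp add: distrib_left)
qed


lemma sum_shift_m: "(\<Sum>k\<in>{m..<m+d}. f k) = (\<Sum>i<d. f (i + m))" for f :: "nat \<Rightarrow> real"
  by (induction d) (auto simp: add.commute)

lemma tail_bound:
  assumes l: "l > 0" and Vs: "summable (\<lambda>k. \<integral>x. (V k x)\<^sup>2 \<partial>M)"
  shows "measure M {x\<in>space M. \<exists>j. l \<le> \<bar>S m (m + j) x\<bar>} \<le> (\<Sum>k. \<integral>x. (V (k + m) x)\<^sup>2 \<partial>M) / l\<^sup>2"
proof -
  let ?t = "(\<Sum>k. \<integral>x. (V (k + m) x)\<^sup>2 \<partial>M)"
  have l2: "l\<^sup>2 > 0" using l by simp
  have Bd: "measure M (B m l d) \<le> ?t / l\<^sup>2" for d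
  proof -
    have "l\<^sup>2 * measure M (B m l d) \<le> (\<integral>x. indicator (B m l d) x * (S m (m + d) x)\<^sup>2 \<partial>M)"
      by (rule maxineq[OF l])
    also have "\<dots> \<le> (\<integral>x. (S m (m + d) x)\<^sup>2 \<partial>M)"
      by (rule integral_mono[OF integrable_mult_indicator[OF B_sets S_sq, simplified] S_sq])
         (auto split: split_indicator)
    also have "\<dots> \<le> (\<Sum>k\<in>{m..<m+d}. \<integral>x. (V k x)\<^sup>2 \<partial>M)" by (rule S_second)
    also have "\<dots> = (\<Sum>i<d. \<integral>x. (V (i + m) x)\<^sup>2 \<partial>M)" by (rule sum_shift_m)
    also have "\<dots> \<le> ?t"
      by (rule sum_le_suminf) (use summable_ignore_initial_segment[OF Vs, of m] in auto)
    finally show ?thesis using l2 by (simp add: le_divide_eq mult.commute)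
  qed
  have inc: "incseq (B m l)" unfolding incseq_def B_def by auto
  have U: "(\<Union>d. B m l d) = {x\<in>space M. \<exists>j. l \<le> \<bar>S m (m + j) x\<bar>}"
    unfolding B_def by auto
  have "(\<lambda>d. measure M (B m l d)) \<longlonglongrightarrow> measure M (\<Union>d. B m l d)"
    by (rule finite_Lim_measure_incseq[OF _ inc]) auto
  then have "measure M (\<Union>d. B m l d) \<le> ?t / l\<^sup>2"
    by (rule LIMSEQ_le_const2) (use Bd in auto)
  then show ?thesis unfolding U .
qed

lemma ae_summable:
  assumes Vs: "summable (\<lambda>k. \<integral>x. (V k x)\<^sup>2 \<partial>M)"
  shows "AE x in M. summable (\<lambda>k. c k x * V k x)"
proof -
  define bad where "bad j = {x\<in>space M. \<forall>m. \<exists>i. inverse (real (Suc j)) \<le> \<bar>S m (m + i) x\<bar>}" for j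
  have bad_sets[measurable]: "bad j \<in> sets M" for j unfolding bad_def by measurable
  define \<tau> where "\<tau> m = (\<Sum>k. \<integral>x. (V (k + m) x)\<^sup>2 \<partial>M)" for m
  have \<tau>l: "\<tau> \<longlonglongrightarrow> 0" unfolding \<tau>_def by (rule suminf_exist_split2[OF Vs])
  have null: "bad j \<in> null_sets M" for j
  proof -
    let ?l = "inverse (real (Suc j))"
    have lp: "?l > 0" by simp
    have b: "measure M (bad j) \<le> \<tau> m / ?l\<^sup>2" for m
    proof -
      have "bad j \<subseteq> {x\<in>space M. \<exists>i. ?l \<le> \<bar>S m (m + i) x\<bar>}" unfolding bad_def by auto
      then have "measure M (bad j) \<le> measure M {x\<in>space M. \<exists>i. ?l \<le> \<bar>S m (m + i) x\<bar>}"
        by (intro finite_measure_mono) measurable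
      also have "\<dots> \<le> \<tau> m / ?l\<^sup>2" unfolding \<tau>_def by (rule tail_bound[OF lp Vs])
      finally show ?thesis .
    qed
    have lim0: "(\<lambda>m. \<tau> m / ?l\<^sup>2) \<longlonglongrightarrow> 0 / ?l\<^sup>2" by (intro tendsto_intros \<tau>l) (use lp in simp)
    have "measure M (bad j) \<le> 0 / ?l\<^sup>2"
      by (rule LIMSEQ_le_const[OF lim0]) (use b in blast)
    then have "measure M (bad j) \<le> 0" by simp
    then have "measure M (bad j) = 0" by (simp add: antisym)
    then show ?thesis by (simp add: null_sets_def emeasure_eq_measure)
  qed
  have "AE x in M. x \<notin> bad j" for j
    by (rule AE_I'[OF null[of j]]) auto
  then have "AE x in M. \<forall>j. x \<notin> bad j" by (simp add: AE_all_countable)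
  then show ?thesis
  proof (rule AE_mp[OF _ AE_I2], intro impI)
    fix x assume x: "x \<in> space M" and nb: "\<forall>j. x \<notin> bad j"
    show "summable (\<lambda>k. c k x * V k x)"
      unfolding summable_Cauchy
    proof (intro allI impI)
      fix e :: real assume e: "e > 0"
      then obtain j where j: "inverse (real (Suc j)) < e / 2"
        using reals_Archimedean[of "e/2"] by auto
      from nb x obtain m where m: "\<And>i. \<bar>S m (m + i) x\<bar> < inverse (real (Suc j))"
        unfolding bad_def by (auto simp: not_le)
      show "\<exists>N. \<forall>m'\<ge>N. \<forall>n. norm (\<Sum>k\<in>{m'..<n}. c k x * V k x) < e"
      proof (intro exI allI impI)
        fix m' n assume mm: "m \<le> m'"
        show "norm (\<Sum>k\<in>{m'..<n}. c k x * V k x) < e"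
        proof (cases "n \<le> m'")
          case True then show ?thesis using e by simp
        next
          case False
          have "(\<Sum>k\<in>{m'..<n}. c k x * V k x) = S m (m + (n - m)) x - S m (m + (m' - m)) x"
            unfolding S_def using mm False sum_diff_nat_ivl[of m m' n "\<lambda>k. c k x * V k x"] by simp
          then show ?thesis using m[of "n - m"] m[of "m' - m"] j by (simp add: abs_diff_less_iff) linarith
        qed
      qed
    qed
  qed
qed

end

theorem mainTheorem1:
  fixes M :: "'a measure"
    and F :: "nat \<Rightarrow> 'a measure"
    and X W :: "nat \<Rightarrow> 'a \<Rightarrow> real"
    and T :: "nat \<Rightarrow> (nat \<Rightarrow> real) \<Rightarrow> real"
    and \<alpha> \<beta> \<gamma> :: "nat \<Rightarrow> real"
    and xs :: real
  assumes "prob_space M"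
    and sub: "\<And>n. n \<ge> 1 \<Longrightarrow> subalgebra M (F n)"
    and incr: "\<And>n m. 1 \<le> n \<Longrightarrow> n \<le> m \<Longrightarrow> sets (F n) \<subseteq> sets (F m)"
    and X_meas: "\<And>n. n \<ge> 1 \<Longrightarrow> X n \<in> borel_measurable (F n)"
    and T_meas: "\<And>n. n \<ge> 1 \<Longrightarrow> T n \<in> borel_measurable (Pi\<^sub>M {1..n} (\<lambda>_. borel))"
    and W_meas: "\<And>n. n \<ge> 1 \<Longrightarrow> W n \<in> borel_measurable (F (Suc n))"
    and rec: "\<And>n \<omega>. n \<ge> 1 \<Longrightarrow> \<omega> \<in> space M \<Longrightarrow>
                X (Suc n) \<omega> = T n (restrict (\<lambda>i. X i \<omega>) {1..n}) + W n \<omega>"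
    and W_cond: "\<And>n. n \<ge> 1 \<Longrightarrow> AE \<omega> in M. real_cond_exp M (F n) (W n) \<omega> = 0"
    and W_sq: "(\<Sum>n. \<integral>\<^sup>+ \<omega>. ennreal ((W (Suc n) \<omega>)\<^sup>2) \<partial>M) < \<infinity>"
    and \<alpha>_nonneg: "\<And>n. n \<ge> 1 \<Longrightarrow> \<alpha> n \<ge> 0"
    and \<beta>_nonneg: "\<And>n. n \<ge> 1 \<Longrightarrow> \<beta> n \<ge> 0"
    and \<gamma>_nonneg: "\<And>n. n \<ge> 1 \<Longrightarrow> \<gamma> n \<ge> 0"
    and \<alpha>_lim: "\<alpha> \<longlonglongrightarrow> 0"
    and \<beta>_sum: "summable (\<lambda>n. \<beta> (Suc n))"
    and \<gamma>_sum: "filterlim (\<lambda>N. \<Sum>n=1..N. \<gamma> n) at_top sequentially"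
    and T_bound: "\<And>n x. n \<ge> 1 \<Longrightarrow> x \<in> space (Pi\<^sub>M {1..n} (\<lambda>_. borel)) \<Longrightarrow>
                \<bar>T n x - xs\<bar> \<le> max (\<alpha> n) ((1 + \<beta> n) * \<bar>x n - xs\<bar> - \<gamma> n)"
  shows "AE \<omega> in M. (\<lambda>n. X n \<omega>) \<longlonglongrightarrow> xs"
  proof -
  interpret P: prob_space M by fact
  define t where "t n \<omega> = T n (restrict (\<lambda>i. X i \<omega>) {1..n}) - xs" for n \<omega>
  define c where "c k \<omega> = t (Suc k) \<omega> / phi (t (Suc k) \<omega>)" for k \<omega>
  have Fsub: "subalgebra (F n) (F i)" if "1 \<le> i" "i \<le> n" for i n
    using sub[of i] sub[of n] incr[of i n] that unfolding subalgebra_def by auto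
  have t_meas: "t n \<in> borel_measurable (F n)" if n: "n \<ge> 1" for n
  proof -
    have "(\<lambda>\<omega>. restrict (\<lambda>i. X i \<omega>) {1..n}) \<in> measurable (F n) (Pi\<^sub>M {1..n} (\<lambda>_. borel))"
    proof (rule measurable_restrict)
      fix i assume "i \<in> {1..n}"
      then show "X i \<in> borel_measurable (F n)"
        using measurable_from_subalg[OF Fsub X_meas[of i]] by auto
    qed
    from measurable_comp[OF this T_meas[OF n]]
    have [measurable]: "(\<lambda>\<omega>. T n (restrict (\<lambda>i. X i \<omega>) {1..n})) \<in> borel_measurable (F n)"
      by (simp add: comp_def)
    show ?thesis unfolding t_def by measurable
  qed
  have c_meas: "c k \<in> borel_measurable (F (Suc k))" for k
    using t_meas[of "Suc k"] unfolding c_def phi_def by measurable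
  have Wmeas[measurable]: "W (Suc k) \<in> borel_measurable M" for k
    using measurable_from_subalg[OF sub W_meas, of "Suc k"] by simp
  have Wnn: "(\<integral>\<^sup>+ \<omega>. ennreal ((W (Suc k) \<omega>)\<^sup>2) \<partial>M) < \<infinity>" for k
    using ennreal_suminf_lessD[OF W_sq] .
  have Wint: "integrable M (\<lambda>\<omega>. (W (Suc k) \<omega>)\<^sup>2)" for k
    by (rule integrableI_nonneg) (use Wnn[of k] in auto)
  have Weq: "(\<integral>\<^sup>+ \<omega>. ennreal ((W (Suc k) \<omega>)\<^sup>2) \<partial>M) = ennreal (\<integral>\<omega>. (W (Suc k) \<omega>)\<^sup>2 \<partial>M)" for k
    by (rule nn_integral_eq_integral[OF Wint]) auto
  have Wsum: "summable (\<lambda>k. \<integral>\<omega>. (W (Suc k) \<omega>)\<^sup>2 \<partial>M)"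
    by (rule summable_suminf_not_top) (use W_sq in \<open>auto simp: Weq[symmetric]\<close>)
  interpret mg M "\<lambda>k. F (Suc k)" "\<lambda>k. W (Suc k)" c
  proof unfold_locales
    show "\<And>k. subalgebra M (F (Suc k))" using sub by simp
    show "\<And>k l. k \<le> l \<Longrightarrow> sets (F (Suc k)) \<subseteq> sets (F (Suc l))" using incr by simp
    show "\<And>k. W (Suc k) \<in> borel_measurable (F (Suc (Suc k)))" using W_meas by simp
    show "\<And>k. integrable M (\<lambda>x. (W (Suc k) x)\<^sup>2)" by (rule Wint)
    show "\<And>k. AE x in M. real_cond_exp M (F (Suc k)) (W (Suc k)) x = 0" using W_cond by simp
    show "\<And>k. c k \<in> borel_measurable (F (Suc k))" by (rule c_meas)
    show "\<And>k x. \<bar>c k x\<bar> \<le> 1" unfolding c_def by (rule phi_deriv_bound)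
  qed
  have AE1: "AE \<omega> in M. summable (\<lambda>k. c k \<omega> * W (Suc k) \<omega>)" by (rule ae_summable[OF Wsum])
  have AE2: "AE \<omega> in M. summable (\<lambda>k. (W (Suc k) \<omega>)\<^sup>2)"
  proof -
    have "(\<integral>\<^sup>+ \<omega>. (\<Sum>k. ennreal ((W (Suc k) \<omega>)\<^sup>2)) \<partial>M) = (\<Sum>k. \<integral>\<^sup>+ \<omega>. ennreal ((W (Suc k) \<omega>)\<^sup>2) \<partial>M)"
      by (rule nn_integral_suminf) measurable
    then have "(\<integral>\<^sup>+ \<omega>. (\<Sum>k. ennreal ((W (Suc k) \<omega>)\<^sup>2)) \<partial>M) \<noteq> \<infinity>" using W_sq by simp
    then have "AE \<omega> in M. (\<Sum>k. ennreal ((W (Suc k) \<omega>)\<^sup>2)) \<noteq> \<infinity>"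
      by (intro nn_integral_PInf_AE) measurable
    then show ?thesis
      by (rule AE_mp[OF _ AE_I2]) (auto intro: summable_suminf_not_top)
  qed
  have \<alpha>S: "(\<lambda>k. \<alpha> (Suc k)) \<longlonglongrightarrow> 0" using \<alpha>_lim by (rule LIMSEQ_Suc)
  have aS: "(\<lambda>k. phi (\<alpha> (Suc k)) - 1) \<longlonglongrightarrow> 0"
  proof -
    have "(\<lambda>k. phi (\<alpha> (Suc k))) \<longlonglongrightarrow> phi 0" by (rule isCont_tendsto_compose[OF phi_cont \<alpha>S])
    then have "(\<lambda>k. phi (\<alpha> (Suc k)) - 1) \<longlonglongrightarrow> phi 0 - 1" by (intro tendsto_intros)
    then show ?thesis by (simp add: phi_def)
  qed
  have \<gamma>S: "filterlim (\<lambda>N. \<Sum>n<N. \<gamma> (Suc n)) at_top sequentially"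
  proof -
    have "(\<Sum>n<N. \<gamma> (Suc n)) = (\<Sum>n=1..N. \<gamma> n)" for N by (induction N) auto
    then show ?thesis using \<gamma>_sum by simp
  qed
  show ?thesis
  proof (rule AE_mp[OF AE_conj_iff[THEN iffD2, OF conjI[OF AE1 AE2]] AE_I2], intro impI)
    fix \<omega> assume \<omega>: "\<omega> \<in> space M" and sm: "summable (\<lambda>k. c k \<omega> * W (Suc k) \<omega>) \<and> summable (\<lambda>k. (W (Suc k) \<omega>)\<^sup>2)"
    define q where "q k = phi (X (Suc k) \<omega> - xs) - 1" for k
    define g where "g k = c k \<omega> * W (Suc k) \<omega> + (W (Suc k) \<omega>)\<^sup>2 / 2" for k
    have gs: "summable g" unfolding g_def using sm by (intro summable_add summable_divide) auto
    have q0: "q k \<ge> 0" for k unfolding q_def using phi_ge1 by simp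
    have "q \<longlonglongrightarrow> 0"
    proof (rule det_conv[OF q0 aS _ \<beta>_sum _ \<gamma>S gs])
      show "\<And>n. 0 \<le> \<beta> (Suc n)" using \<beta>_nonneg by simp
      show "\<And>n. 0 \<le> \<gamma> (Suc n)" using \<gamma>_nonneg by simp
      fix \<epsilon> :: real assume e: "\<epsilon> > 0"
      show "\<exists>\<kappa>>0. \<forall>n. q (Suc n) \<le> g n + max (phi (\<alpha> (Suc n)) - 1) (max \<epsilon> ((1 + \<beta> (Suc n)) * q n + \<beta> (Suc n) - \<gamma> (Suc n) * \<kappa>))"
      proof (intro exI conjI allI)
        show "\<epsilon> / phi \<epsilon> > 0" using e phi_pos[of \<epsilon>] by simp
        fix n
        let ?x = "restrict (\<lambda>i. X i \<omega>) {1..Suc n}"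
        have xsp: "?x \<in> space (Pi\<^sub>M {1..Suc n} (\<lambda>_. borel))" by (simp add: space_PiM)
        have tb: "\<bar>t (Suc n) \<omega>\<bar> \<le> max (\<alpha> (Suc n)) ((1 + \<beta> (Suc n)) * \<bar>X (Suc n) \<omega> - xs\<bar> - \<gamma> (Suc n))"
          using T_bound[OF _ xsp] unfolding t_def by simp
        have ps: "phi (t (Suc n) \<omega>) - 1 \<le> max (phi (\<alpha> (Suc n)) - 1) (max \<epsilon> ((1 + \<beta> (Suc n)) * (phi (X (Suc n) \<omega> - xs) - 1) + \<beta> (Suc n) - \<gamma> (Suc n) * (\<epsilon> / phi \<epsilon>)))"
          by (rule phi_step[OF \<alpha>_nonneg \<beta>_nonneg \<gamma>_nonneg e tb]) simp_all
        have xr: "X (Suc (Suc n)) \<omega> - xs = t (Suc n) \<omega> + W (Suc n) \<omega>"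
          using rec[of "Suc n" \<omega>] \<omega> unfolding t_def by simp
        have "q (Suc n) \<le> phi (t (Suc n) \<omega>) - 1 + g n"
          unfolding q_def xr g_def c_def using phi_taylor[of "t (Suc n) \<omega>" "W (Suc n) \<omega>"] by simp
        then show "q (Suc n) \<le> g n + max (phi (\<alpha> (Suc n)) - 1) (max \<epsilon> ((1 + \<beta> (Suc n)) * q n + \<beta> (Suc n) - \<gamma> (Suc n) * (\<epsilon> / phi \<epsilon>)))"
          using ps unfolding q_def by simp
      qed
    qed
    then have "(\<lambda>k. sqrt (q k * (q k + 2))) \<longlonglongrightarrow> sqrt (0 * (0 + 2))" by (intro tendsto_intros)
    moreover have "sqrt (q k * (q k + 2)) = \<bar>X (Suc k) \<omega> - xs\<bar>" for k
    proof -
      have "q k * (q k + 2) = (phi (X (Suc k) \<omega> - xs))\<^sup>2 - 1" unfolding q_def by (simp add: power2_eq_square algebra_simps)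
      also have "\<dots> = (X (Suc k) \<omega> - xs)\<^sup>2" by (simp add: phi_sq)
      finally show ?thesis by simp
    qed
    ultimately have "(\<lambda>k. \<bar>X (Suc k) \<omega> - xs\<bar>) \<longlonglongrightarrow> 0" by simp
    then have "(\<lambda>k. X (Suc k) \<omega> - xs) \<longlonglongrightarrow> 0" by (simp add: tendsto_rabs_zero_iff)
    then have "(\<lambda>k. X (Suc k) \<omega>) \<longlonglongrightarrow> xs" by (simp add: LIM_zero_iff)
    then show "(\<lambda>n. X n \<omega>) \<longlonglongrightarrow> xs" by (rule LIMSEQ_imp_Suc)
  qed
qed

end
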